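(* Let $f$ be a probability density supported on $\mathbb{R}_+=[0,\infty)$ that is càdlàg (right-continuous with left limits at every point). Let $\mathcal{M}$ be the class of non-increasing probability densities on $\mathbb{R}_+$ and define $$\pi_0:=\sup\big\{\pi:\exists g\in\mathcal{M}\text{ such that } f-\pi g\ge 0\text{ a.e.}\big\}.$$ Then $$\pi_0=\int_0^\infty h_0(x)\,dx,\qquad h_0(x):=\operatorname{ess\,inf}\{f(y): y\le x\}.$$ Moreover, if $\pi_0>0$, the supremum is attained by the density $g_0:=h_0/\pi_0$ and by no other density in $\mathcal{M}$ (densities identified up to a.e. equality).
   Context: For a function $f$ and $x\ge 0$, $\operatorname{ess\,inf}\{f(y):y\le x\}$ denotes the essential infimum of $f$ over $[0,x]$ with respect to Lebesgue measure, i.e. the supremum of $t$ such that $\{y\in[0,x]: f(y)<t\}$ has Lebesgue measure zero. Densities are understood up to Lebesgue-null sets. *)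

theory Defs
  imports "HOL-Analysis.Analysis"
begin

text \<open>Essential infimum of f over [0,x] w.r.t. Lebesgue measure:
  the supremum of all t such that {y in [0,x]. f y < t} is Lebesgue-null.
  (For x <= 0 the set of such t is unbounded and the value is an irrelevant
  junk constant; only x > 0 matters for integrals and a.e. statements.)\<close>
definition ess_inf_upto :: "(real \<Rightarrow> real) \<Rightarrow> real \<Rightarrow> real" where
  "ess_inf_upto f x = Sup {t. emeasure lborel {y \<in> {0..x}. f y < t} = 0}"

definition prob_density_Rplus :: "(real \<Rightarrow> real) \<Rightarrow> bool" where
  "prob_density_Rplus f \<longleftrightarrow> f \<in> borel_measurable lborel \<and>
     (\<forall>x\<ge>0. 0 \<le> f x) \<and> (\<forall>x<0. f x = 0) \<and>
     set_integrable lborel {0..} f \<and> (LINT x:{0..}|lborel. f x) = 1"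

definition cadlag :: "(real \<Rightarrow> real) \<Rightarrow> bool" where
  "cadlag f \<longleftrightarrow> (\<forall>x. continuous (at_right x) f \<and> (\<exists>l. (f \<longlongrightarrow> l) (at_left x)))"

text \<open>The class M: non-increasing probability densities on [0,oo)
  (as functions determined up to null sets; the value at 0 and on the
  negative half-line is irrelevant).\<close>
definition noninc_density :: "(real \<Rightarrow> real) \<Rightarrow> bool" where
  "noninc_density g \<longleftrightarrow> g \<in> borel_measurable lborel \<and>
     (\<forall>x>0. 0 \<le> g x) \<and> (\<forall>x y. 0 < x \<longrightarrow> x \<le> y \<longrightarrow> g y \<le> g x) \<and>
     set_integrable lborel {0<..} g \<and> (LINT x:{0<..}|lborel. g x) = 1"

definition dominated :: "(real \<Rightarrow> real) \<Rightarrow> real \<Rightarrow> (real \<Rightarrow> real) \<Rightarrow> bool" where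
  "dominated f p g \<longleftrightarrow> (AE x in lborel. 0 \<le> x \<longrightarrow> 0 \<le> f x - p * g x)"

definition pi0 :: "(real \<Rightarrow> real) \<Rightarrow> real" where
  "pi0 f = Sup {p. \<exists>g. noninc_density g \<and> dominated f p g}"

end

theory Submission
  imports Defs
begin

lemma rc_lemma:
  fixes f :: "real \<Rightarrow> real"
  assumes "cadlag f" "f y < t"
  shows "\<exists>d>0. \<forall>z. y \<le> z \<and> z < y + d \<longrightarrow> f z < t"
proof -
  have "continuous (at_right y) f" using assms(1) unfolding cadlag_def by blast
  hence "(f \<longlongrightarrow> f y) (at_right y)"
    by (simp add: continuous_within)
  hence "eventually (\<lambda>z. f z < t) (at_right y)"
    using assms(2) order_tendstoD(2) by blast
  then obtain b where b: "b > y" "\<forall>z>y. z < b \<longrightarrow> f z < t"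
    unfolding eventually_at_right_field by blast
  show ?thesis
    apply (rule exI[of _ "b - y"]) using b assms(2)
    by (metis add.commute diff_add_cancel diff_gt_0_iff_gt order_le_less)
qed

lemma pos_measure_contra:
  assumes "AE x in lborel. P x" "a < (b::real)" "\<forall>z. a < z \<and> z < b \<longrightarrow> \<not> P z"
  shows False
proof -
  obtain N where N: "{x \<in> space lborel. \<not> P x} \<subseteq> N" "emeasure lborel N = 0" "N \<in> sets lborel"
    using assms(1) by (rule AE_E)
  have "{a<..<b} \<subseteq> N" using N(1) assms(3) by auto
  hence "emeasure lborel {a<..<b} \<le> emeasure lborel N" using N(3) by (rule emeasure_mono)
  thus False using N(2) assms(2) by simp
qed

lemma null_iff:
  fixes f :: "real \<Rightarrow> real"
  assumes "cadlag f" "f \<in> borel_measurable lborel" "x > 0"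
  shows "emeasure lborel {y \<in> {0..x}. f y < t} = 0 \<longleftrightarrow> (\<forall>y\<in>{0..<x}. t \<le> f y)"
proof
  assume "\<forall>y\<in>{0..<x}. t \<le> f y"
  hence "{y \<in> {0..x}. f y < t} \<subseteq> {x}" by force
  hence "emeasure lborel {y \<in> {0..x}. f y < t} \<le> emeasure lborel {x}"
    by (rule emeasure_mono) simp
  thus "emeasure lborel {y \<in> {0..x}. f y < t} = 0" by simp
next
  assume h: "emeasure lborel {y \<in> {0..x}. f y < t} = 0"
  show "\<forall>y\<in>{0..<x}. t \<le> f y"
  proof (rule ccontr)
    assume "\<not> ?thesis"
    then obtain y where y: "y \<in> {0..<x}" "f y < t" by force
    obtain d where d: "d > 0" "\<forall>z. y \<le> z \<and> z < y + d \<longrightarrow> f z < t"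
      using rc_lemma[OF assms(1) y(2)] by blast
    have "AE z in lborel. z \<notin> {y \<in> {0..x}. f y < t}"
      apply (rule AE_not_in) using h assms(2) by (auto intro: null_setsI)
    thus False
      apply (rule pos_measure_contra[where a=y and b="min (y+d) x"])
      using y d by auto
  qed
qed

locale setting =
  fixes f :: "real \<Rightarrow> real"
  assumes meas[measurable]: "f \<in> borel_measurable lborel"
    and nonneg: "\<And>x. 0 \<le> x \<Longrightarrow> 0 \<le> f x"
    and cad: "cadlag f"
begin

abbreviation "h \<equiv> ess_inf_upto f"

lemma h_eq: "x > 0 \<Longrightarrow> h x = Sup {t. \<forall>y\<in>{0..<x}. t \<le> f y}"
  unfolding ess_inf_upto_def using null_iff[OF cad meas] by simp

lemma h_lower: "x > 0 \<Longrightarrow> y \<in> {0..<x} \<Longrightarrow> h x \<le> f y"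
  unfolding h_eq by (rule cSup_least) (use nonneg in force)+

lemma h_ge: "x > 0 \<Longrightarrow> \<forall>y\<in>{0..<x}. t \<le> f y \<Longrightarrow> t \<le> h x"
  unfolding h_eq by (rule cSup_upper) (auto simp: bdd_above_def intro!: exI[of _ "f 0"])

lemma h_nonneg: "x > 0 \<Longrightarrow> 0 \<le> h x"
  by (rule h_ge) (use nonneg in auto)

lemma h_le_f0: "x > 0 \<Longrightarrow> h x \<le> f 0"
  by (rule h_lower) auto

lemma h_antimono: "0 < x \<Longrightarrow> x \<le> x' \<Longrightarrow> h x' \<le> h x"
  by (rule h_ge) (auto intro!: h_lower)

lemma h_nonpos: "x \<le> 0 \<Longrightarrow> h x = Sup (UNIV::real set)"
proof -
  assume "x \<le> 0"
  hence "{y \<in> {0..x}. f y < t} \<subseteq> {0}" for t by auto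
  hence "emeasure lborel {y \<in> {0..x}. f y < t} = 0" for t
  proof -
    fix t
    have "emeasure lborel {y \<in> {0..x}. f y < t} \<le> emeasure lborel {0::real}"
      by (rule emeasure_mono) (use \<open>x \<le> 0\<close> in auto)
    thus "emeasure lborel {y \<in> {0..x}. f y < t} = 0" by simp
  qed
  thus ?thesis unfolding ess_inf_upto_def by simp
qed

lemma h_meas[measurable]: "h \<in> borel_measurable lborel"
proof -
  define \<phi> where "\<phi> x = (if 0 < x then - h x else - f 0)" for x
  have "mono \<phi>"
  proof (rule monoI)
    fix x y :: real assume "x \<le> y"
    show "\<phi> x \<le> \<phi> y"
    proof (cases "0 < x")
      case True thus ?thesis using \<open>x \<le> y\<close> h_antimono[of x y] by (simp add: \<phi>_def)
    next
      case False thus ?thesis using h_le_f0[of y] by (simp add: \<phi>_def)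
    qed
  qed
  hence m: "\<phi> \<in> borel_measurable borel" by (rule borel_measurable_mono)
  hence m': "\<phi> \<in> borel_measurable lborel" by simp
  have "h = (\<lambda>x. if 0 < x then - \<phi> x else Sup (UNIV::real set))"
    using h_nonpos by (auto simp: \<phi>_def fun_eq_iff)
  also have "\<dots> \<in> borel_measurable lborel" using m' by measurable
  finally show ?thesis .
qed

lemma J_countable: "countable {x. 0 < x \<and> f x < h x}"
proof -
  define J where "J = {x. 0 < x \<and> f x < h x}"
  define q where "q x = (SOME r. r \<in> \<rat> \<and> f x < r \<and> r < h x)" for x
  have q: "q x \<in> \<rat> \<and> f x < q x \<and> q x < h x" if "x \<in> J" for x
  proof -
    have "\<exists>r. r \<in> \<rat> \<and> f x < r \<and> r < h x"
    proof -
      have "f x < h x" using that unfolding J_def by simp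
      from Rats_dense_in_real[OF this] obtain r where "r \<in> \<rat>" "f x < r" "r < h x" by blast
      thus ?thesis by (intro exI[of _ r]) simp
    qed
    thus ?thesis unfolding q_def by (rule someI_ex)
  qed
  have lt: "q x' < q x" if "x \<in> J" "x' \<in> J" "x < x'" for x x'
  proof -
    have "x' > 0" "x \<in> {0..<x'}" using that by (auto simp: J_def)
    hence "h x' \<le> f x" by (rule h_lower)
    thus ?thesis using q[OF that(1)] q[OF that(2)] by linarith
  qed
  have "inj_on q J"
  proof (rule inj_onI)
    fix x x' assume "x \<in> J" "x' \<in> J" "q x = q x'"
    thus "x = x'" using lt[of x x'] lt[of x' x] by (metis less_irrefl linorder_cases)
  qed
  moreover have "countable (q ` J)"
    by (rule countable_subset[OF _ countable_rat]) (use q in blast)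
  ultimately have "countable J" using countable_image_inj_on by blast
  thus ?thesis unfolding J_def .
qed

lemma AE_h_le_f: "AE x in lborel. 0 < x \<longrightarrow> h x \<le> f x"
  using AE_not_in[OF countable_imp_null_set_lborel[OF J_countable]] by eventually_elim auto

lemma AE_ne0: "AE x in lborel. x \<noteq> (0::real)"
  using AE_not_in[OF countable_imp_null_set_lborel[of "{0::real}"]] by auto

lemma bound:
  assumes g: "noninc_density g" and d: "dominated f p g" and p: "0 \<le> p" and x: "x > 0"
  shows "p * g x \<le> h x"
proof (rule h_ge[OF x], rule ccontr)
  assume "\<not> (\<forall>y\<in>{0..<x}. p * g x \<le> f y)"
  then obtain y where y: "y \<in> {0..<x}" "f y < p * g x" by force
  obtain e where e: "e > 0" "\<forall>z. y \<le> z \<and> z < y + e \<longrightarrow> f z < p * g x"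
    using rc_lemma[OF cad y(2)] by blast
  have ae: "AE z in lborel. 0 \<le> z \<longrightarrow> 0 \<le> f z - p * g z"
    using d unfolding dominated_def .
  show False
  proof (rule pos_measure_contra[OF ae, where a=y and b="min (y+e) x"])
    show "y < min (y + e) x" using y e by auto
    show "\<forall>z. y < z \<and> z < min (y + e) x \<longrightarrow> \<not> (0 \<le> z \<longrightarrow> 0 \<le> f z - p * g z)"
    proof (intro allI impI)
      fix z assume z: "y < z \<and> z < min (y + e) x"
      have "g x \<le> g z" using g z y unfolding noninc_density_def by auto
      hence "p * g x \<le> p * g z" using p by (rule mult_left_mono)
      moreover have "f z < p * g x" using e z by auto
      ultimately show "\<not> (0 \<le> z \<longrightarrow> 0 \<le> f z - p * g z)" using z y by auto
    qed
  qed
qed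

end


lemma example_density: "noninc_density (indicator {0<..1::real})"
proof -
  have e: "(\<lambda>x::real. indicator {0<..} x *\<^sub>R (indicator {0<..1::real} x :: real)) = indicator {0<..1}"
    by (auto simp: fun_eq_iff split: split_indicator)
  have "integrable lborel (indicator {0<..1::real} :: real \<Rightarrow> real)"
    by (rule integrable_real_indicator) auto
  moreover have "integral\<^sup>L lborel (indicator {0<..1::real} :: real \<Rightarrow> real) = 1"
    by simp
  ultimately show ?thesis
    unfolding noninc_density_def set_integrable_def set_lebesgue_integral_def e
    by (auto split: split_indicator)
qed

theorem mainTheorem4:
  fixes f :: "real \<Rightarrow> real"
  assumes "prob_density_Rplus f" and "cadlag f"
  shows "set_integrable lborel {0..} (ess_inf_upto f)
       \<and> pi0 f = (LINT x:{0..}|lborel. ess_inf_upto f x)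
       \<and> (pi0 f > 0 \<longrightarrow>
            noninc_density (\<lambda>x. ess_inf_upto f x / pi0 f)
          \<and> dominated f (pi0 f) (\<lambda>x. ess_inf_upto f x / pi0 f)
          \<and> (\<forall>g. noninc_density g \<and> dominated f (pi0 f) g \<longrightarrow>
                 (AE x in lborel. 0 \<le> x \<longrightarrow> g x = ess_inf_upto f x / pi0 f)))"
proof -
  have fm[measurable]: "f \<in> borel_measurable lborel" and fnn: "\<And>x. 0 \<le> x \<Longrightarrow> 0 \<le> f x"
    and fneg: "\<And>x. x < 0 \<Longrightarrow> f x = 0" and fint: "set_integrable lborel {0..} f"
    using assms(1) unfolding prob_density_Rplus_def by auto
  interpret setting f using fm fnn assms(2) by unfold_locales auto
  have hint: "set_integrable lborel {0..} h"
    unfolding set_integrable_def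
  proof (rule Bochner_Integration.integrable_bound[where f="\<lambda>x. indicator {0..} x *\<^sub>R f x"])
    show "integrable lborel (\<lambda>x. indicator {0..} x *\<^sub>R f x)"
      using fint unfolding set_integrable_def .
    show "(\<lambda>x. indicator {0..} x *\<^sub>R h x) \<in> borel_measurable lborel" by measurable
    show "AE x in lborel. norm (indicator {0..} x *\<^sub>R h x) \<le> norm (indicator {0..} x *\<^sub>R f x)"
      using AE_h_le_f AE_ne0
    proof eventually_elim
      case (elim x)
      show ?case
      proof (cases "x > 0")
        case True thus ?thesis using elim h_nonneg[of x] fnn[of x] by (auto simp: indicator_def)
      next
        case False thus ?thesis using elim by (auto simp: indicator_def)
      qed
    qed
  qed
  have hint': "set_integrable lborel {0<..} h"
    by (rule set_integrable_subset[OF hint]) auto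
  define c where "c = (LINT x:{0..}|lborel. h x)"
  have c': "c = (LINT x:{0<..}|lborel. h x)"
    unfolding c_def
    by (rule set_integral_cong_set) (use AE_ne0 in \<open>auto simp: set_borel_measurable_def\<close>)
  have c_nn: "0 \<le> c"
    unfolding c' set_lebesgue_integral_def
    by (rule Bochner_Integration.integral_nonneg) (use h_nonneg in \<open>auto simp: indicator_def\<close>)
  define S where "S = {p. \<exists>g. noninc_density g \<and> dominated f p g}"
  have ub: "p \<le> c" if "p \<in> S" for p
  proof (cases "p \<le> 0")
    case True thus ?thesis using c_nn by simp
  next
    case False
    from that obtain g where g: "noninc_density g" "dominated f p g" unfolding S_def by blast
    have gi: "set_integrable lborel {0<..} g" and g1: "(LINT x:{0<..}|lborel. g x) = 1"
      using g(1) unfolding noninc_density_def by auto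
    have "p = (LINT x:{0<..}|lborel. p * g x)" using g1 by simp
    also have "\<dots> \<le> (LINT x:{0<..}|lborel. h x)"
      by (rule set_integral_mono) (use gi hint' bound[OF g] False in auto)
    finally show ?thesis unfolding c' .
  qed
  have dom: "dominated f c (\<lambda>x. h x / c)" if "c > 0"
    unfolding dominated_def using AE_h_le_f AE_ne0
    by eventually_elim (use that in auto)
  have nd: "noninc_density (\<lambda>x. h x / c)" if "c > 0"
    unfolding noninc_density_def
  proof (intro conjI allI impI)
    show "(\<lambda>x. h x / c) \<in> borel_measurable lborel" by measurable
    show "0 \<le> h x / c" if "0 < x" for x using h_nonneg[OF that] \<open>c > 0\<close> by simp
    show "h y / c \<le> h x / c" if "0 < x" "x \<le> y" for x y
      using h_antimono[OF that] \<open>c > 0\<close> by (simp add: divide_right_mono)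
    show "set_integrable lborel {0<..} (\<lambda>x. h x / c)" using hint' by auto
    show "(LINT x:{0<..}|lborel. h x / c) = 1" using c' \<open>c > 0\<close> by simp
  qed
  have cS: "c \<in> S"
  proof (cases "c > 0")
    case True thus ?thesis using dom nd unfolding S_def by blast
  next
    case False
    hence "c = 0" using c_nn by simp
    moreover have "dominated f 0 (indicator {0<..1})"
      unfolding dominated_def using fnn by auto
    ultimately show ?thesis using example_density unfolding S_def by blast
  qed
  have pc: "pi0 f = c"
    unfolding pi0_def S_def[symmetric] by (rule cSup_eq_maximum[OF cS ub])
  have uniq: "AE x in lborel. 0 \<le> x \<longrightarrow> g x = h x / c"
    if cp: "c > 0" and g: "noninc_density g" "dominated f c g" for g
  proof -
    have gi: "set_integrable lborel {0<..} g" and g1: "(LINT x:{0<..}|lborel. g x) = 1"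
      and gm: "g \<in> borel_measurable lborel"
      using g(1) unfolding noninc_density_def by auto
    have bd: "c * g x \<le> h x" if "x > 0" for x using bound[OF g _ that] cp by simp
    have di: "set_integrable lborel {0<..} (\<lambda>x. h x - c * g x)"
      using hint' gi by auto
    have "(LINT x:{0<..}|lborel. h x - c * g x) = 0"
      using hint' gi g1 c' by simp
    hence "AE x in lborel. indicator {0<..} x *\<^sub>R (h x - c * g x) = 0"
      using di bd unfolding set_integrable_def set_lebesgue_integral_def
      by (subst (asm) integral_nonneg_eq_0_iff_AE) (auto simp: indicator_def)
    thus ?thesis using AE_ne0
    proof eventually_elim
      case (elim x)
      show ?case using elim cp by (auto simp: indicator_def field_simps)
    qed
  qed
  show ?thesis
    using hint pc dom nd uniq unfolding c_def by auto
qed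

end
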